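(* Let $\lambda\ge0$. For all integers $k,m\ge1$ there exists $t$ with the following property. Let $G$ be a $\lambda$-spread digraph such that no vertex of $G$ is $(k,m)$-rich. Then $V(G)$ can be partitioned into $t$ sets $X_1,\dots,X_t$ such that for each $1\le i\le t$, either no $(m+1)$-clique of $G[X_i]$ has a source, or no $(m+1)$-clique of $G[X_i]$ has a sink.
   Context: Digraphs are finite, with no loops, parallel edges or antiparallel pairs; $G^*$ is the underlying undirected graph. $N^+(v)$, $N^-(v)$ are the out- and in-neighbourhoods of $v$. A digraph $G$ is $\lambda$-spread if for every vertex $v$ and all $A\subseteq N^+(v)$, $B\subseteq N^-(v)$ with $|A|=|B|=\lambda$, some vertex of $A$ is $G^*$-adjacent with some vertex of $B$. A $k$-clique is a clique (in $G^*$) of cardinality $k$. For a clique $X$ of $G$, a vertex of $X$ is a source of $X$ if it is adjacent to every other vertex of $X$, and a sink if it is adjacent from every other vertex of $X$. For $A,B\subseteq V(G)$, $A$ is $G^*$-complete with $B$ if $A\cap B=\emptyset$ and every vertex of $A$ is $G^*$-adjacent with every vertex of $B$. A vertex $v$ is $(k,m)$-rich if there exist $k$ pairwise disjoint $m$-cliques $A_1,\dots,A_k\subseteq N^+(v)$ and $k$ pairwise disjoint $m$-cliques $B_1,\dots,B_k\subseteq N^-(v)$ such that $A_1\cup\dots\cup A_k$ is $G^*$-complete with $B_1\cup\dots\cup B_k$. *)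

theory Defs
  imports Main
begin

text \<open>A digraph is given by a finite vertex set V and an edge relation E
  (E u v means the edge u -> v). Being a relation excludes parallel edges;
  we require no loops and no antiparallel pairs.\<close>

definition digraph :: "'a set \<Rightarrow> ('a \<Rightarrow> 'a \<Rightarrow> bool) \<Rightarrow> bool" where
  "digraph V E \<longleftrightarrow> finite V \<and> (\<forall>u v. E u v \<longrightarrow> u \<in> V \<and> v \<in> V)
     \<and> (\<forall>v. \<not> E v v) \<and> (\<forall>u v. \<not> (E u v \<and> E v u))"

definition uadj :: "('a \<Rightarrow> 'a \<Rightarrow> bool) \<Rightarrow> 'a \<Rightarrow> 'a \<Rightarrow> bool" where
  "uadj E u v \<longleftrightarrow> E u v \<or> E v u"

definition out_nbhd :: "'a set \<Rightarrow> ('a \<Rightarrow> 'a \<Rightarrow> bool) \<Rightarrow> 'a \<Rightarrow> 'a set" where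
  "out_nbhd V E v = {u \<in> V. E v u}"

definition in_nbhd :: "'a set \<Rightarrow> ('a \<Rightarrow> 'a \<Rightarrow> bool) \<Rightarrow> 'a \<Rightarrow> 'a set" where
  "in_nbhd V E v = {u \<in> V. E u v}"

definition spread :: "nat \<Rightarrow> 'a set \<Rightarrow> ('a \<Rightarrow> 'a \<Rightarrow> bool) \<Rightarrow> bool" where
  "spread lam V E \<longleftrightarrow> (\<forall>v \<in> V. \<forall>A B. A \<subseteq> out_nbhd V E v \<longrightarrow> B \<subseteq> in_nbhd V E v \<longrightarrow>
      card A = lam \<longrightarrow> card B = lam \<longrightarrow> (\<exists>a \<in> A. \<exists>b \<in> B. uadj E a b))"

definition is_clique :: "('a \<Rightarrow> 'a \<Rightarrow> bool) \<Rightarrow> 'a set \<Rightarrow> bool" where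
  "is_clique E X \<longleftrightarrow> (\<forall>u \<in> X. \<forall>v \<in> X. u \<noteq> v \<longrightarrow> uadj E u v)"

definition k_clique :: "nat \<Rightarrow> 'a set \<Rightarrow> ('a \<Rightarrow> 'a \<Rightarrow> bool) \<Rightarrow> 'a set \<Rightarrow> bool" where
  "k_clique k V E X \<longleftrightarrow> X \<subseteq> V \<and> finite X \<and> card X = k \<and> is_clique E X"

definition is_source :: "('a \<Rightarrow> 'a \<Rightarrow> bool) \<Rightarrow> 'a set \<Rightarrow> 'a \<Rightarrow> bool" where
  "is_source E X v \<longleftrightarrow> v \<in> X \<and> (\<forall>u \<in> X. u \<noteq> v \<longrightarrow> E v u)"

definition is_sink :: "('a \<Rightarrow> 'a \<Rightarrow> bool) \<Rightarrow> 'a set \<Rightarrow> 'a \<Rightarrow> bool" where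
  "is_sink E X v \<longleftrightarrow> v \<in> X \<and> (\<forall>u \<in> X. u \<noteq> v \<longrightarrow> E u v)"

definition ucomplete :: "('a \<Rightarrow> 'a \<Rightarrow> bool) \<Rightarrow> 'a set \<Rightarrow> 'a set \<Rightarrow> bool" where
  "ucomplete E A B \<longleftrightarrow> A \<inter> B = {} \<and> (\<forall>a \<in> A. \<forall>b \<in> B. uadj E a b)"

definition rich :: "nat \<Rightarrow> nat \<Rightarrow> 'a set \<Rightarrow> ('a \<Rightarrow> 'a \<Rightarrow> bool) \<Rightarrow> 'a \<Rightarrow> bool" where
  "rich k m V E v \<longleftrightarrow> (\<exists>As Bs :: nat \<Rightarrow> 'a set.
     (\<forall>i < k. k_clique m V E (As i) \<and> As i \<subseteq> out_nbhd V E v) \<and>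
     (\<forall>i < k. k_clique m V E (Bs i) \<and> Bs i \<subseteq> in_nbhd V E v) \<and>
     (\<forall>i < k. \<forall>j < k. i \<noteq> j \<longrightarrow> As i \<inter> As j = {} \<and> Bs i \<inter> Bs j = {}) \<and>
     ucomplete E (\<Union>i < k. As i) (\<Union>i < k. Bs i))"

text \<open>Cliques of the induced subdigraph G[X] are exactly the cliques of G contained in X.\<close>
definition no_source_clique :: "nat \<Rightarrow> ('a \<Rightarrow> 'a \<Rightarrow> bool) \<Rightarrow> 'a set \<Rightarrow> bool" where
  "no_source_clique n E X \<longleftrightarrow> (\<forall>C. k_clique n X E C \<longrightarrow> \<not> (\<exists>s. is_source E C s))"

definition no_sink_clique :: "nat \<Rightarrow> ('a \<Rightarrow> 'a \<Rightarrow> bool) \<Rightarrow> 'a set \<Rightarrow> bool" where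
  "no_sink_clique n E X \<longleftrightarrow> (\<forall>C. k_clique n X E C \<longrightarrow> \<not> (\<exists>s. is_sink E C s))"

end

theory Submission
  imports Defs "HOL-Library.Ramsey"
begin


lemma low_degree_vertex:
  fixes V :: "'a set" and T :: "'a \<Rightarrow> 'a set"
  assumes fin: "finite V" and ne: "V \<noteq> {}" and dT: "\<And>v. card (T v \<inter> V) \<le> d"
  shows "\<exists>w\<in>V. card {u\<in>V. u \<noteq> w \<and> (u \<in> T w \<or> w \<in> T u)} \<le> 2*d"
proof (rule ccontr)
  assume "\<not> ?thesis"
  hence big: "\<And>w. w \<in> V \<Longrightarrow> 2*d + 1 \<le> card {u\<in>V. u \<noteq> w \<and> (u \<in> T w \<or> w \<in> T u)}" by force
  define cnt where "cnt w = card {u\<in>V. w \<in> T u}" for w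
  have nb: "card {u\<in>V. u \<noteq> w \<and> (u \<in> T w \<or> w \<in> T u)} \<le> d + cnt w" for w
  proof -
    have "{u\<in>V. u \<noteq> w \<and> (u \<in> T w \<or> w \<in> T u)} \<subseteq> (T w \<inter> V) \<union> {u\<in>V. w \<in> T u}" by blast
    hence "card {u\<in>V. u \<noteq> w \<and> (u \<in> T w \<or> w \<in> T u)} \<le> card ((T w \<inter> V) \<union> {u\<in>V. w \<in> T u})"
      by (intro card_mono) (auto simp: fin)
    also have "\<dots> \<le> card (T w \<inter> V) + card {u\<in>V. w \<in> T u}" by (rule card_Un_le)
    finally show ?thesis using dT[of w] unfolding cnt_def by linarith
  qed
  have cnt_sum: "(\<Sum>w\<in>V. cnt w) \<le> d * card V"
  proof -
    have "(\<Sum>w\<in>V. cnt w) = (\<Sum>w\<in>V. \<Sum>u\<in>V. if w \<in> T u then 1 else 0)"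
      unfolding cnt_def using fin by (simp add: sum.inter_filter[symmetric])
    also have "\<dots> = (\<Sum>u\<in>V. \<Sum>w\<in>V. if w \<in> T u then 1 else 0)" by (rule sum.swap)
    also have "\<dots> = (\<Sum>u\<in>V. card {w\<in>V. w \<in> T u})"
      using fin by (simp add: sum.inter_filter[symmetric])
    also have "\<dots> \<le> (\<Sum>u\<in>V. d)"
    proof (rule sum_mono)
      fix u assume "u \<in> V"
      have "{w\<in>V. w \<in> T u} = T u \<inter> V" by blast
      thus "card {w\<in>V. w \<in> T u} \<le> d" using dT[of u] by simp
    qed
    finally show ?thesis by (simp add: mult.commute)
  qed
  have "(\<Sum>w\<in>V. 2*d+1) \<le> (\<Sum>w\<in>V. card {u\<in>V. u \<noteq> w \<and> (u \<in> T w \<or> w \<in> T u)})"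
    by (rule sum_mono) (rule big)
  also have "\<dots> \<le> (\<Sum>w\<in>V. d + cnt w)" by (rule sum_mono) (rule nb)
  also have "\<dots> = d * card V + (\<Sum>w\<in>V. cnt w)" by (simp add: sum.distrib mult.commute)
  finally have "(2*d+1) * card V \<le> 2 * d * card V" using cnt_sum by simp
  moreover have "card V > 0" using fin ne by (simp add: card_gt_0_iff)
  ultimately show False by simp
qed

lemma colouring:
  fixes V :: "'a set" and T :: "'a \<Rightarrow> 'a set"
  assumes fin: "finite V" and dT: "\<And>v. card (T v \<inter> V) \<le> d"
  shows "\<exists>c::'a \<Rightarrow> nat. (\<forall>v\<in>V. c v < 2*d+1) \<and> (\<forall>v\<in>V. \<forall>u\<in>V. u \<in> T v \<longrightarrow> u \<noteq> v \<longrightarrow> c u \<noteq> c v)"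
  using fin
proof (induction V rule: finite_remove_induct)
  case empty
  then show ?case by auto
next
  case (remove A)
  have dA: "card (T v \<inter> A) \<le> d" for v
  proof -
    have "card (T v \<inter> A) \<le> card (T v \<inter> V)" using remove(3) fin by (intro card_mono) auto
    thus ?thesis using dT[of v] by simp
  qed
  have "\<exists>w\<in>A. card {u\<in>A. u \<noteq> w \<and> (u \<in> T w \<or> w \<in> T u)} \<le> 2*d"
    by (rule low_degree_vertex[OF remove(1) remove(2)]) (rule dA)
  then obtain w where w: "w \<in> A" and lw: "card {u\<in>A. u \<noteq> w \<and> (u \<in> T w \<or> w \<in> T u)} \<le> 2*d"
    by (elim bexE) (rule that)
  define Nb where "Nb = {u\<in>A. u \<noteq> w \<and> (u \<in> T w \<or> w \<in> T u)}"
  obtain c where c1: "\<forall>v\<in>A-{w}. c v < 2*d+1"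
    and c2: "\<forall>v\<in>A-{w}. \<forall>u\<in>A-{w}. u \<in> T v \<longrightarrow> u \<noteq> v \<longrightarrow> c u \<noteq> c v"
    using remove(4)[OF w] by blast
  have finNb: "finite Nb" using remove(1) unfolding Nb_def by simp
  have "card (c ` Nb) \<le> 2*d" using lw card_image_le[OF finNb, of c] unfolding Nb_def[symmetric] by linarith
  hence "\<not> {..<2*d+1} \<subseteq> c ` Nb"
    using card_mono[of "c ` Nb" "{..<2*d+1}"] finNb by auto
  then obtain col where col: "col < 2*d+1" "col \<notin> c ` Nb" by auto
  define c' where "c' = c(w := col)"
  show ?case
  proof (intro exI[of _ c'] conjI ballI impI)
    fix v assume "v \<in> A" thus "c' v < 2*d+1" using c1 col unfolding c'_def by auto
  next
    fix v u assume v: "v \<in> A" and u: "u \<in> A" and uv: "u \<in> T v" "u \<noteq> v"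
    show "c' u \<noteq> c' v"
    proof (cases "v = w")
      case True
      hence "u \<in> Nb" using u uv unfolding Nb_def by auto
      thus ?thesis using True col uv unfolding c'_def by auto
    next
      case False
      show ?thesis
      proof (cases "u = w")
        case True
        hence "v \<in> Nb" using v uv False unfolding Nb_def by auto
        thus ?thesis using True col uv unfolding c'_def by force
      next
        case False2: False
        thus ?thesis using c2 u v uv False unfolding c'_def by auto
      qed
    qed
  qed
qed



lemma hitting:
  fixes Q :: "'a set \<Rightarrow> bool"
  assumes cq: "\<And>C. Q C \<Longrightarrow> finite C \<and> card C = m"
    and np: "\<not> (\<exists>A::nat \<Rightarrow> 'a set. (\<forall>i<M. Q (A i)) \<and> (\<forall>i<M. \<forall>j<M. i \<noteq> j \<longrightarrow> A i \<inter> A j = {}))"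
  shows "\<exists>T. finite T \<and> card T \<le> m*M \<and> (\<forall>C. Q C \<longrightarrow> C \<inter> T \<noteq> {})"
proof -
  define Pk where "Pk p \<longleftrightarrow> (\<exists>A::nat \<Rightarrow> 'a set. (\<forall>i<p. Q (A i)) \<and> (\<forall>i<p. \<forall>j<p. i \<noteq> j \<longrightarrow> A i \<inter> A j = {}))" for p
  define S where "S = {p. p < M \<and> Pk p}"
  have P0: "Pk 0" unfolding Pk_def by simp
  have M0: "M > 0" using np P0 unfolding Pk_def by (cases M) auto
  have finS: "finite S" unfolding S_def by simp
  have "0 \<in> S" using M0 P0 unfolding S_def by simp
  define p where "p = Max S"
  have pS: "p \<in> S" unfolding p_def using finS \<open>0 \<in> S\<close> by (intro Max_in) auto
  have pmax: "q \<le> p" if "q \<in> S" for q unfolding p_def using finS that by simp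
  from pS obtain A where A1: "\<forall>i<p. Q (A i)" and A2: "\<forall>i<p. \<forall>j<p. i \<noteq> j \<longrightarrow> A i \<inter> A j = {}"
    and pM: "p < M" unfolding S_def Pk_def by blast
  define T where "T = (\<Union>i<p. A i)"
  have "card T \<le> (\<Sum>i<p. card (A i))" unfolding T_def by (rule card_UN_le) simp
  also have "\<dots> \<le> (\<Sum>i<p. m)" using A1 cq by (intro sum_mono) auto
  also have "\<dots> = p * m" by simp
  also have "\<dots> \<le> m * M" using pM by simp
  finally have cT: "card T \<le> m * M" .
  have hit: "C \<inter> T \<noteq> {}" if "Q C" for C
  proof
    assume dis: "C \<inter> T = {}"
    define A' where "A' = A(p := C)"
    have "\<forall>i<Suc p. Q (A' i)" using A1 that unfolding A'_def by (auto simp: less_Suc_eq)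
    moreover have "\<forall>i<Suc p. \<forall>j<Suc p. i \<noteq> j \<longrightarrow> A' i \<inter> A' j = {}"
      using A2 dis unfolding A'_def T_def by (auto simp: less_Suc_eq)
    ultimately have "Pk (Suc p)" unfolding Pk_def by blast
    show False
    proof (cases "Suc p < M")
      case True
      hence "Suc p \<in> S" using \<open>Pk (Suc p)\<close> unfolding S_def by simp
      thus False using pmax by fastforce
    next
      case False
      hence "Suc p = M" using pM by simp
      thus False using \<open>Pk (Suc p)\<close> np unfolding Pk_def by blast
    qed
  qed
  have "finite T" unfolding T_def using A1 cq by auto
  thus ?thesis using cT hit by blast
qed



lemma key:
  fixes lam k m :: nat assumes k1: "k \<ge> 1"
  shows "\<exists>M::nat. \<forall>(V::'a set) E v (A::nat\<Rightarrow>'a set) (B::nat\<Rightarrow>'a set).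
    digraph V E \<longrightarrow> spread lam V E \<longrightarrow> v\<in>V \<longrightarrow> \<not> rich k m V E v \<longrightarrow>
    (\<forall>i<M. k_clique m V E (A i) \<and> A i \<subseteq> out_nbhd V E v) \<longrightarrow> (\<forall>i<M. \<forall>j<M. i\<noteq>j \<longrightarrow> A i \<inter> A j = {}) \<longrightarrow>
    (\<forall>i<M. k_clique m V E (B i) \<and> B i \<subseteq> in_nbhd V E v) \<longrightarrow> (\<forall>i<M. \<forall>j<M. i\<noteq>j \<longrightarrow> B i \<inter> B j = {}) \<longrightarrow> False"
proof -
  define s where "s = max k lam"
  have s1: "s \<ge> 1" "k \<le> s" "lam \<le> s" using k1 unfolding s_def by auto
  define U where "U = Pow ({..<m} \<times> {..<m})"
  define Cn where "Cn = card U"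
  have finU: "finite U" unfolding U_def by simp
  obtain N :: nat where N: "partn_lst {..<N} (replicate Cn (2*s)) 2" using ramsey_full by blast
  show ?thesis
  proof (intro exI[of _ N] allI impI)
    fix V :: "'a set" and E v and A B :: "nat \<Rightarrow> 'a set"
    assume dg: "digraph V E" and sp: "spread lam V E" and vV: "v \<in> V" and nr: "\<not> rich k m V E v"
      and hA: "\<forall>i<N. k_clique m V E (A i) \<and> A i \<subseteq> out_nbhd V E v"
      and dA: "\<forall>i<N. \<forall>j<N. i\<noteq>j \<longrightarrow> A i \<inter> A j = {}"
      and hB: "\<forall>i<N. k_clique m V E (B i) \<and> B i \<subseteq> in_nbhd V E v"
      and dB: "\<forall>i<N. \<forall>j<N. i\<noteq>j \<longrightarrow> B i \<inter> B j = {}"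
    have bijex: "\<exists>h. bij_betw h {..<m} X" if "k_clique m V E X" for X
    proof -
      have "finite X" "card X = m" using that unfolding k_clique_def by auto
      thus ?thesis using ex_bij_betw_nat_finite[of X] by (simp add: atLeast0LessThan)
    qed
    define ea where "ea i = (SOME h. bij_betw h {..<m} (A i))" for i
    define eb where "eb i = (SOME h. bij_betw h {..<m} (B i))" for i
    have ea: "bij_betw (ea i) {..<m} (A i)" if "i < N" for i
      unfolding ea_def using bijex hA that by (metis someI_ex)
    have eb: "bij_betw (eb i) {..<m} (B i)" if "i < N" for i
      unfolding eb_def using bijex hB that by (metis someI_ex)
    define P where "P i j = {(a,b). a<m \<and> b<m \<and> uadj E (ea i a) (eb j b)}" for i j
    have PU: "P i j \<in> U" for i j unfolding P_def U_def by auto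
    obtain g where g: "bij_betw g U {0..<Cn}" using ex_bij_betw_finite_nat[OF finU] unfolding Cn_def by blast
    define f where "f X = g (P (Min X) (Max X))" for X
    have f: "f \<in> nsets {..<N} 2 \<rightarrow> {..<length (replicate Cn (2*s))}"
    proof
      fix X
      have "g (P (Min X) (Max X)) \<in> {0..<Cn}" using g PU by (meson bij_betwE)
      thus "f X \<in> {..<length (replicate Cn (2*s))}" unfolding f_def by simp
    qed
    obtain c H where c: "c < length (replicate Cn (2*s))"
      and H: "H \<in> nsets {..<N} (replicate Cn (2*s) ! c)" and fH: "f ` nsets H 2 \<subseteq> {c}"
      by (rule partn_lstE[OF N f refl])
    have HN: "H \<subseteq> {..<N}" and finH: "finite H" and cH: "card H = 2*s"
      using H c unfolding nsets_def by auto
    define xs where "xs = sorted_list_of_set H"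
    have lxs: "length xs = 2*s" unfolding xs_def using cH by simp
    have sxs: "set xs = H" unfolding xs_def using finH by simp
    have srt: "sorted_wrt (<) xs" unfolding xs_def by simp
    have dxs: "distinct xs" unfolding xs_def by simp
    have xsN: "xs ! i < N" if "i < 2*s" for i using HN sxs lxs that nth_mem by fastforce
    have xsH: "xs ! i \<in> H" if "i < 2*s" for i using sxs lxs that nth_mem by fastforce
    have xinj: "i = j" if "i < 2*s" "j < 2*s" "xs!i = xs!j" for i j
      using dxs lxs that nth_eq_iff_index_eq by metis
    have lt: "xs!t < xs!(s+u)" if "t < s" "u < s" for t u
      using sorted_wrt_nth_less[OF srt, of t "s+u"] that lxs by simp
    have Pc: "g (P (xs!t) (xs!(s+u))) = c" if "t < s" "u < s" for t u
    proof -
      have ltt: "xs!t < xs!(s+u)" using lt that .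
      have "{xs!t, xs!(s+u)} \<in> nsets H 2" using xsH that ltt by auto
      hence "f {xs!t, xs!(s+u)} = c" using fH by blast
      moreover have "Min {xs!t, xs!(s+u)} = xs!t" "Max {xs!t, xs!(s+u)} = xs!(s+u)" using ltt by auto
      ultimately show ?thesis unfolding f_def by simp
    qed
    define P0 where "P0 = P (xs!0) (xs!s)"
    have Peq: "P (xs!t) (xs!(s+u)) = P0" if "t < s" "u < s" for t u
    proof -
      have "g (P (xs!t) (xs!(s+u))) = g P0" using Pc[OF that] Pc[of 0 0] s1 unfolding P0_def by simp
      thus ?thesis using inj_onD[OF bij_betw_imp_inj_on[OF g] _ PU PU] unfolding P0_def by blast
    qed
    have Aim: "A i = ea i ` {..<m}" if "i < N" for i using ea[OF that] unfolding bij_betw_def by simp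
    have Bim: "B i = eb i ` {..<m}" if "i < N" for i using eb[OF that] unfolding bij_betw_def by simp
    have outin: "out_nbhd V E v \<inter> in_nbhd V E v = {}"
      using dg unfolding digraph_def out_nbhd_def in_nbhd_def by blast
    show False
    proof (cases "{..<m} \<times> {..<m} \<subseteq> P0")
      case True
      define As where "As t = A (xs!t)" for t
      define Bs where "Bs t = B (xs!(s+t))" for t
      have r1: "\<forall>i<k. k_clique m V E (As i) \<and> As i \<subseteq> out_nbhd V E v"
      proof (intro allI impI)
        fix i assume "i < k"
        hence "i < 2*s" using s1 by auto
        thus "k_clique m V E (As i) \<and> As i \<subseteq> out_nbhd V E v"
          unfolding As_def using hA xsN by auto
      qed
      have r2: "\<forall>i<k. k_clique m V E (Bs i) \<and> Bs i \<subseteq> in_nbhd V E v"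
      proof (intro allI impI)
        fix i assume "i < k"
        hence "s + i < 2*s" using s1 by auto
        thus "k_clique m V E (Bs i) \<and> Bs i \<subseteq> in_nbhd V E v"
          unfolding Bs_def using hB xsN by auto
      qed
      have r3: "\<forall>i<k. \<forall>j<k. i \<noteq> j \<longrightarrow> As i \<inter> As j = {} \<and> Bs i \<inter> Bs j = {}"
      proof (intro allI impI)
        fix i j assume ij: "i < k" "j < k" "i \<noteq> j"
        hence ij2: "i < 2*s" "j < 2*s" "s + i < 2*s" "s+j < 2*s" using s1 by auto
        have "xs!i \<noteq> xs!j" using xinj ij ij2 by blast
        moreover have "xs!(s+i) \<noteq> xs!(s+j)" using xinj[OF ij2(3,4)] ij by auto
        ultimately show "As i \<inter> As j = {} \<and> Bs i \<inter> Bs j = {}"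
          unfolding As_def Bs_def using dA dB xsN ij2 by auto
      qed
      have r4: "ucomplete E (\<Union>i<k. As i) (\<Union>i<k. Bs i)" unfolding ucomplete_def
      proof (intro conjI ballI)
        have "(\<Union>i<k. As i) \<subseteq> out_nbhd V E v" "(\<Union>i<k. Bs i) \<subseteq> in_nbhd V E v"
          using r1 r2 by auto
        thus "(\<Union>i<k. As i) \<inter> (\<Union>i<k. Bs i) = {}" using outin by blast
      next
        fix x y assume x: "x \<in> (\<Union>i<k. As i)" and y: "y \<in> (\<Union>i<k. Bs i)"
        then obtain t u where tu: "t < k" "u < k" "x \<in> A (xs!t)" "y \<in> B (xs!(s+u))"
          unfolding As_def Bs_def by blast
        hence tu2: "t < s" "u < s" "t < 2*s" "s+u < 2*s" using s1 by auto
        obtain a where a: "a < m" "x = ea (xs!t) a" using Aim[OF xsN[OF tu2(3)]] tu by auto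
        obtain b where b: "b < m" "y = eb (xs!(s+u)) b" using Bim[OF xsN[OF tu2(4)]] tu by auto
        have "(a,b) \<in> P (xs!t) (xs!(s+u))" using Peq[OF tu2(1,2)] True a b by auto
        thus "uadj E x y" using a b unfolding P_def by simp
      qed
      have "rich k m V E v" unfolding rich_def using r1 r2 r3 r4 by blast
      thus False using nr by simp
    next
      case False
      then obtain a b where ab: "a < m" "b < m" "(a,b) \<notin> P0" by auto
      define A' where "A' = (\<lambda>t. ea (xs!t) a) ` {..<lam}"
      define B' where "B' = (\<lambda>u. eb (xs!(s+u)) b) ` {..<lam}"
      have ix: "t < 2*s" "s + t < 2*s" if "t < lam" for t using that s1 by auto
      have inA: "ea (xs!t) a \<in> A (xs!t)" if "t < lam" for t
        using Aim[OF xsN[OF ix(1)[OF that]]] ab by auto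
      have inB: "eb (xs!(s+t)) b \<in> B (xs!(s+t))" if "t < lam" for t
        using Bim[OF xsN[OF ix(2)[OF that]]] ab by auto
      have injA: "inj_on (\<lambda>t. ea (xs!t) a) {..<lam}"
      proof (rule inj_onI)
        fix t t' assume t: "t \<in> {..<lam}" "t' \<in> {..<lam}" and eq: "ea (xs!t) a = ea (xs!t') a"
        have tl: "t < lam" "t' < lam" using t by auto
        show "t = t'"
        proof (rule ccontr)
          assume ne: "t \<noteq> t'"
          have "xs!t \<noteq> xs!t'" using xinj[OF ix(1)[OF tl(1)] ix(1)[OF tl(2)]] ne by blast
          hence "A (xs!t) \<inter> A (xs!t') = {}" using dA xsN[OF ix(1)[OF tl(1)]] xsN[OF ix(1)[OF tl(2)]] by blast
          thus False using inA[OF tl(1)] inA[OF tl(2)] eq by auto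
        qed
      qed
      have injB: "inj_on (\<lambda>t. eb (xs!(s+t)) b) {..<lam}"
      proof (rule inj_onI)
        fix t t' assume t: "t \<in> {..<lam}" "t' \<in> {..<lam}" and eq: "eb (xs!(s+t)) b = eb (xs!(s+t')) b"
        have tl: "t < lam" "t' < lam" using t by auto
        show "t = t'"
        proof (rule ccontr)
          assume ne: "t \<noteq> t'"
          have "xs!(s+t) \<noteq> xs!(s+t')" using xinj[OF ix(2)[OF tl(1)] ix(2)[OF tl(2)]] ne by auto
          hence "B (xs!(s+t)) \<inter> B (xs!(s+t')) = {}" using dB xsN[OF ix(2)[OF tl(1)]] xsN[OF ix(2)[OF tl(2)]] by blast
          thus False using inB[OF tl(1)] inB[OF tl(2)] eq by auto
        qed
      qed
      have cA: "card A' = lam" unfolding A'_def using card_image[OF injA] by simp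
      have cB: "card B' = lam" unfolding B'_def using card_image[OF injB] by simp
      have sA: "A' \<subseteq> out_nbhd V E v" unfolding A'_def
      proof (rule image_subsetI)
        fix t assume "t \<in> {..<lam}"
        hence tl: "t < lam" by simp
        show "ea (xs!t) a \<in> out_nbhd V E v" using inA[OF tl] hA xsN[OF ix(1)[OF tl]] by blast
      qed
      have sB: "B' \<subseteq> in_nbhd V E v" unfolding B'_def
      proof (rule image_subsetI)
        fix t assume "t \<in> {..<lam}"
        hence tl: "t < lam" by simp
        show "eb (xs!(s+t)) b \<in> in_nbhd V E v" using inB[OF tl] hB xsN[OF ix(2)[OF tl]] by blast
      qed
      have "\<exists>x\<in>A'. \<exists>y\<in>B'. uadj E x y"
        using sp vV sA sB cA cB unfolding spread_def by blast
      then obtain x y where xy: "x \<in> A'" "y \<in> B'" "uadj E x y" by blast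
      then obtain t u where tu: "t < lam" "u < lam" "x = ea (xs!t) a" "y = eb (xs!(s+u)) b"
        unfolding A'_def B'_def by blast
      hence "t < s" "u < s" using s1 by auto
      hence "(a,b) \<in> P (xs!t) (xs!(s+u))" using xy tu ab unfolding P_def by simp
      thus False using Peq[OF \<open>t < s\<close> \<open>u < s\<close>] ab by simp
    qed
  qed
qed


theorem theorem3p2:
  fixes lam k m :: nat
  assumes "k \<ge> 1" and "m \<ge> 1"
  shows "\<exists>t::nat. \<forall>(V::nat set) E.
           digraph V E \<longrightarrow> spread lam V E \<longrightarrow> (\<forall>v \<in> V. \<not> rich k m V E v) \<longrightarrow>
           (\<exists>X :: nat \<Rightarrow> nat set.
              (\<Union>i < t. X i) = V \<and>
              (\<forall>i < t. \<forall>j < t. i \<noteq> j \<longrightarrow> X i \<inter> X j = {}) \<and>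
              (\<forall>i < t. no_source_clique (m + 1) E (X i) \<or> no_sink_clique (m + 1) E (X i)))"
proof -
  obtain M where M: "\<forall>(V::nat set) E v (A::nat\<Rightarrow>nat set) (B::nat\<Rightarrow>nat set).
    digraph V E \<longrightarrow> spread lam V E \<longrightarrow> v\<in>V \<longrightarrow> \<not> rich k m V E v \<longrightarrow>
    (\<forall>i<M. k_clique m V E (A i) \<and> A i \<subseteq> out_nbhd V E v) \<longrightarrow> (\<forall>i<M. \<forall>j<M. i\<noteq>j \<longrightarrow> A i \<inter> A j = {}) \<longrightarrow>
    (\<forall>i<M. k_clique m V E (B i) \<and> B i \<subseteq> in_nbhd V E v) \<longrightarrow> (\<forall>i<M. \<forall>j<M. i\<noteq>j \<longrightarrow> B i \<inter> B j = {}) \<longrightarrow> False"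
    using key[OF assms(1), of lam m, where 'a=nat] by (elim exE) (rule that)
  define d where "d = m * M"
  define K where "K = 2*d+1"
  show ?thesis
  proof (intro exI[of _ "2*K"] allI impI)
    fix V :: "nat set" and E
    assume dg: "digraph V E" and sp: "spread lam V E" and nr: "\<forall>v \<in> V. \<not> rich k m V E v"
    have finV: "finite V" using dg unfolding digraph_def by simp
    define Qo where "Qo v C \<longleftrightarrow> k_clique m V E C \<and> C \<subseteq> out_nbhd V E v" for v C
    define Qi where "Qi v C \<longleftrightarrow> k_clique m V E C \<and> C \<subseteq> in_nbhd V E v" for v C
    define po where "po v \<longleftrightarrow> (\<exists>A::nat \<Rightarrow> nat set. (\<forall>i<M. Qo v (A i)) \<and> (\<forall>i<M. \<forall>j<M. i \<noteq> j \<longrightarrow> A i \<inter> A j = {}))" for v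
    define pi where "pi v \<longleftrightarrow> (\<exists>A::nat \<Rightarrow> nat set. (\<forall>i<M. Qi v (A i)) \<and> (\<forall>i<M. \<forall>j<M. i \<noteq> j \<longrightarrow> A i \<inter> A j = {}))" for v
    have notboth: "\<not> (po v \<and> pi v)" if "v \<in> V" for v
    proof
      assume "po v \<and> pi v"
      then obtain A B where "(\<forall>i<M. Qo v (A i)) \<and> (\<forall>i<M. \<forall>j<M. i \<noteq> j \<longrightarrow> A i \<inter> A j = {})"
        "(\<forall>i<M. Qi v (B i)) \<and> (\<forall>i<M. \<forall>j<M. i \<noteq> j \<longrightarrow> B i \<inter> B j = {})"
        unfolding po_def pi_def by blast
      thus False using M[rule_format, of V E v A B] dg sp that nr unfolding Qo_def Qi_def by blast
    qed
    define sg where "sg v \<longleftrightarrow> \<not> po v" for v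
    define Q where "Q v C \<longleftrightarrow> (if sg v then Qo v C else Qi v C)" for v C
    have exT: "\<exists>T. finite T \<and> card T \<le> m*M \<and> (\<forall>C. Q v C \<longrightarrow> C \<inter> T \<noteq> {})" if "v \<in> V" for v
    proof (rule hitting)
      fix C assume "Q v C"
      thus "finite C \<and> card C = m" unfolding Q_def Qo_def Qi_def k_clique_def by (auto split: if_splits)
    next
      show "\<not> (\<exists>A::nat \<Rightarrow> nat set. (\<forall>i<M. Q v (A i)) \<and> (\<forall>i<M. \<forall>j<M. i \<noteq> j \<longrightarrow> A i \<inter> A j = {}))"
      proof (cases "sg v")
        case True
        thus ?thesis unfolding Q_def sg_def po_def by simp
      next
        case False
        hence "\<not> pi v" using notboth that unfolding sg_def by blast
        thus ?thesis using False unfolding Q_def pi_def by simp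
      qed
    qed
    define T where "T v = (if v \<in> V then (SOME T. finite T \<and> card T \<le> m*M \<and> (\<forall>C. Q v C \<longrightarrow> C \<inter> T \<noteq> {})) else {})" for v
    have T1: "finite (T v) \<and> card (T v) \<le> d" for v
    proof (cases "v \<in> V")
      case True
      show ?thesis using someI_ex[OF exT[OF True]] True unfolding T_def d_def by simp
    next
      case False thus ?thesis unfolding T_def by simp
    qed
    have T2: "C \<inter> T v \<noteq> {}" if "v \<in> V" "Q v C" for v C
      using someI_ex[OF exT[OF that(1)]] that unfolding T_def by simp
    have dT: "card (T v \<inter> V) \<le> d" for v
      using T1[of v] card_mono[of "T v" "T v \<inter> V"] by auto
    obtain c where c1: "\<forall>v\<in>V. c v < 2*d+1"
      and c2: "\<forall>v\<in>V. \<forall>u\<in>V. u \<in> T v \<longrightarrow> u \<noteq> v \<longrightarrow> c u \<noteq> c v"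
      using colouring[OF finV, of T d] dT by blast
    define X where "X i = {v\<in>V. if i < K then sg v \<and> c v = i else \<not> sg v \<and> c v = i - K}" for i
    have XV: "X i \<subseteq> V" for i unfolding X_def by auto
    have cover: "(\<Union>i < 2*K. X i) = V"
    proof
      show "(\<Union>i < 2*K. X i) \<subseteq> V" using XV by blast
    next
      show "V \<subseteq> (\<Union>i < 2*K. X i)"
      proof
        fix v assume v: "v \<in> V"
        have cv: "c v < K" using c1 v unfolding K_def by auto
        show "v \<in> (\<Union>i < 2*K. X i)"
        proof (cases "sg v")
          case True
          hence "v \<in> X (c v)" using v cv unfolding X_def by simp
          thus ?thesis using cv by force
        next
          case False
          hence "v \<in> X (K + c v)" using v cv unfolding X_def by simp
          thus ?thesis using cv by force
        qed
      qed
    qed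
    have disj: "\<forall>i < 2*K. \<forall>j < 2*K. i \<noteq> j \<longrightarrow> X i \<inter> X j = {}"
    proof (intro allI impI)
      fix i j assume "i < 2*K" "j < 2*K" "i \<noteq> j"
      show "X i \<inter> X j = {}"
      proof (rule ccontr)
        assume "X i \<inter> X j \<noteq> {}"
        then obtain v where "v \<in> X i" "v \<in> X j" by blast
        thus False using \<open>i \<noteq> j\<close> unfolding X_def by (auto split: if_splits)
      qed
    qed
    have cl: "k_clique m V E (C - {s0})" if "k_clique (m+1) (X i) E C" "s0 \<in> C" for C s0 i
    proof -
      have "C \<subseteq> V" "finite C" "card C = m + 1" "is_clique E C" using that XV unfolding k_clique_def by auto
      thus ?thesis using that(2) unfolding k_clique_def is_clique_def by auto
    qed
    have good: "no_source_clique (m + 1) E (X i) \<or> no_sink_clique (m + 1) E (X i)" for i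
    proof (cases "i < K")
      case True
      have "no_source_clique (m + 1) E (X i)" unfolding no_source_clique_def
      proof (intro allI impI notI)
        fix C assume kc: "k_clique (m + 1) (X i) E C" and "\<exists>s. is_source E C s"
        then obtain s0 where s0: "is_source E C s0" by blast
        have CX: "C \<subseteq> X i" using kc unfolding k_clique_def by simp
        have s0X: "s0 \<in> X i" using s0 CX unfolding is_source_def by blast
        hence s0V: "s0 \<in> V" and sgs: "sg s0" and cs: "c s0 = i" using True unfolding X_def by auto
        have "Qo s0 (C - {s0})" unfolding Qo_def
        proof
          show "k_clique m V E (C - {s0})" using cl[OF kc] s0 unfolding is_source_def by blast
          show "C - {s0} \<subseteq> out_nbhd V E s0" using s0 CX XV unfolding is_source_def out_nbhd_def by blast
        qed
        hence "Q s0 (C - {s0})" using sgs unfolding Q_def by simp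
        then obtain u where u: "u \<in> C - {s0}" "u \<in> T s0" using T2[OF s0V] by blast
        hence uV: "u \<in> V" and cu: "c u = i" using CX True unfolding X_def by auto
        have "c u \<noteq> c s0" using c2 s0V uV u by blast
        thus False using cs cu by simp
      qed
      thus ?thesis by simp
    next
      case False
      have "no_sink_clique (m + 1) E (X i)" unfolding no_sink_clique_def
      proof (intro allI impI notI)
        fix C assume kc: "k_clique (m + 1) (X i) E C" and "\<exists>s. is_sink E C s"
        then obtain s0 where s0: "is_sink E C s0" by blast
        have CX: "C \<subseteq> X i" using kc unfolding k_clique_def by simp
        have s0X: "s0 \<in> X i" using s0 CX unfolding is_sink_def by blast
        hence s0V: "s0 \<in> V" and sgs: "\<not> sg s0" and cs: "c s0 = i - K" using False unfolding X_def by auto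
        have "Qi s0 (C - {s0})" unfolding Qi_def
        proof
          show "k_clique m V E (C - {s0})" using cl[OF kc] s0 unfolding is_sink_def by blast
          show "C - {s0} \<subseteq> in_nbhd V E s0" using s0 CX XV unfolding is_sink_def in_nbhd_def by blast
        qed
        hence "Q s0 (C - {s0})" using sgs unfolding Q_def by simp
        then obtain u where u: "u \<in> C - {s0}" "u \<in> T s0" using T2[OF s0V] by blast
        hence uV: "u \<in> V" and cu: "c u = i - K" using CX False unfolding X_def by auto
        have "c u \<noteq> c s0" using c2 s0V uV u by blast
        thus False using cs cu by simp
      qed
      thus ?thesis by simp
    qed
    show "\<exists>X :: nat \<Rightarrow> nat set.
              (\<Union>i < 2*K. X i) = V \<and>
              (\<forall>i < 2*K. \<forall>j < 2*K. i \<noteq> j \<longrightarrow> X i \<inter> X j = {}) \<and>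
              (\<forall>i < 2*K. no_source_clique (m + 1) E (X i) \<or> no_sink_clique (m + 1) E (X i))"
      using cover disj good by blast
  qed
qed

end
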